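(* Let $f:\mathbb Z^m\to\mathbb R^N$ be a discrete isothermic net, let $s:\mathbb Z^m\to\mathbb R\setminus\{0\}$ satisfy $l(M,f_{ij})/l(M,f)=s_{ij}/s$ and $l(M,f_j)/l(M,f_i)=s_j/s_i$ for every elementary quadrilateral $(f,f_i,f_{ij},f_j)$ with diagonal intersection $M$, and define the edge labelling $\alpha_i$ by $|f_i-f|^2=\alpha_i s s_i$. Then for every $u$ and $i\ne j$, $q(f,f_i,f_{ij},f_j)=\alpha_i/\alpha_j$.
   Context: Notation: for $f:\mathbb Z^m\to\mathbb R^N$, $f=f(u)$, $f_i=f(u+e_i)$, $f_{ij}=f(u+e_i+e_j)$ with $e_i$ the unit vectors, similarly for $s$. A Q-net is a map such that each elementary quadrilateral $(f,f_i,f_{ij},f_j)$ ($i\ne j$) is planar, assumed non-degenerate (distinct vertices, no three collinear, diagonals meeting in a point $M$ distinct from the vertices). Two planar quadrilaterals $(A,B,C,D)$, $(A^*,B^*,C^*,D^* )$ are dual if $A^*B^*\parallel AB$, $B^*C^*\parallel BC$, $C^*D^*\parallel CD$, $D^*A^*\parallel DA$, $A^*C^*\parallel BD$, $B^*D^*\parallel AC$. A Q-net $f$ is a discrete Koenigs net if there is a Q-net $f^*$ with every $(f^*,f^*_i,f^*_{ij},f^*_j)$ dual to $(f,f_i,f_{ij},f_j)$. A circular net is a Q-net all of whose elementary quadrilaterals have their four vertices on a circle. A discrete isothermic net is a circular net which is a discrete Koenigs net. For collinear points $P,Q$, $l(P,Q)$ is the directed (signed) length along their line. For four concircular points $a,b,c,d\in\mathbb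 R^N$, $q(a,b,c,d)=(a-b)(b-c)^{-1}(c-d)(d-a)^{-1}$, computed after identifying a $2$-plane containing them with $\mathbb C$; it is real. (Such $s$ exists and the $\alpha_i$ so defined form an edge labelling: real functions on edges parallel to the $i$-th axis taking equal values on opposite edges of every elementary square.) *)

theory Defs
  imports "HOL-Analysis.Analysis"
begin

definition ev :: "'m::finite \<Rightarrow> int ^ 'm" where
  "ev i = axis i 1"

definition nondeg_quad :: "'a::euclidean_space \<Rightarrow> 'a \<Rightarrow> 'a \<Rightarrow> 'a \<Rightarrow> bool" where
  "nondeg_quad A B C D \<longleftrightarrow> distinct [A, B, C, D]
     \<and> \<not> collinear {A, B, C} \<and> \<not> collinear {A, B, D}
     \<and> \<not> collinear {A, C, D} \<and> \<not> collinear {B, C, D}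
     \<and> (\<exists>M. M \<in> affine hull {A, C} \<and> M \<in> affine hull {B, D} \<and> M \<notin> {A, B, C, D})"

definition planar_quad :: "'a::euclidean_space \<Rightarrow> 'a \<Rightarrow> 'a \<Rightarrow> 'a \<Rightarrow> bool" where
  "planar_quad A B C D \<longleftrightarrow> coplanar {A, B, C, D}"

definition Q_net :: "(int ^ 'm::finite \<Rightarrow> real ^ 'n::finite) \<Rightarrow> bool" where
  "Q_net f \<longleftrightarrow> (\<forall>u i j. i \<noteq> j \<longrightarrow>
     planar_quad (f u) (f (u + ev i)) (f (u + ev i + ev j)) (f (u + ev j))
     \<and> nondeg_quad (f u) (f (u + ev i)) (f (u + ev i + ev j)) (f (u + ev j)))"

definition parallel_vec :: "'a::real_vector \<Rightarrow> 'a \<Rightarrow> bool" where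
  "parallel_vec v w \<longleftrightarrow> (\<exists>c. c \<noteq> 0 \<and> v = c *\<^sub>R w)"

definition dual_quad :: "'a::euclidean_space \<Rightarrow> 'a \<Rightarrow> 'a \<Rightarrow> 'a \<Rightarrow> 'a \<Rightarrow> 'a \<Rightarrow> 'a \<Rightarrow> 'a \<Rightarrow> bool" where
  "dual_quad A B C D A' B' C' D' \<longleftrightarrow>
     parallel_vec (B' - A') (B - A) \<and> parallel_vec (C' - B') (C - B)
   \<and> parallel_vec (D' - C') (D - C) \<and> parallel_vec (A' - D') (A - D)
   \<and> parallel_vec (C' - A') (D - B) \<and> parallel_vec (D' - B') (C - A)"

definition koenigs_net :: "(int ^ 'm::finite \<Rightarrow> real ^ 'n::finite) \<Rightarrow> bool" where
  "koenigs_net f \<longleftrightarrow> Q_net f \<and> (\<exists>fs :: int ^ 'm \<Rightarrow> real ^ 'n. Q_net fs \<and>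
     (\<forall>u i j. i \<noteq> j \<longrightarrow>
        dual_quad (fs u) (fs (u + ev i)) (fs (u + ev i + ev j)) (fs (u + ev j))
                  (f u) (f (u + ev i)) (f (u + ev i + ev j)) (f (u + ev j))))"

definition concircular :: "'a::euclidean_space \<Rightarrow> 'a \<Rightarrow> 'a \<Rightarrow> 'a \<Rightarrow> bool" where
  "concircular a b c d \<longleftrightarrow> (\<exists>z r. r > 0 \<and> coplanar {z, a, b, c, d}
     \<and> dist z a = r \<and> dist z b = r \<and> dist z c = r \<and> dist z d = r)"

definition circular_net :: "(int ^ 'm::finite \<Rightarrow> real ^ 'n::finite) \<Rightarrow> bool" where
  "circular_net f \<longleftrightarrow> Q_net f \<and> (\<forall>u i j. i \<noteq> j \<longrightarrow>
     concircular (f u) (f (u + ev i)) (f (u + ev i + ev j)) (f (u + ev j)))"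

definition isothermic_net :: "(int ^ 'm::finite \<Rightarrow> real ^ 'n::finite) \<Rightarrow> bool" where
  "isothermic_net f \<longleftrightarrow> circular_net f \<and> koenigs_net f"

text \<open>Directed length from P to Q along a line with unit direction vector d.\<close>
definition dlen :: "'a::real_inner \<Rightarrow> 'a \<Rightarrow> 'a \<Rightarrow> real" where
  "dlen d P Q = (Q - P) \<bullet> d"

text \<open>Complex cross-ratio and its transfer to R^N via an isometric identification of a
2-plane containing the points with C.\<close>
definition cross_ratio :: "complex \<Rightarrow> complex \<Rightarrow> complex \<Rightarrow> complex \<Rightarrow> complex" where
  "cross_ratio a b c d = (a - b) * inverse (b - c) * (c - d) * inverse (d - a)"

definition plane_emb :: "'a::real_inner \<Rightarrow> 'a \<Rightarrow> 'a \<Rightarrow> complex \<Rightarrow> 'a" where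
  "plane_emb p e1 e2 z = p + Re z *\<^sub>R e1 + Im z *\<^sub>R e2"

definition qcr :: "'a::real_inner \<Rightarrow> 'a \<Rightarrow> 'a \<Rightarrow> 'a \<Rightarrow> complex" where
  "qcr a b c d = (SOME w. \<exists>p e1 e2 za zb zc zd.
      e1 \<bullet> e1 = 1 \<and> e2 \<bullet> e2 = 1 \<and> e1 \<bullet> e2 = 0
    \<and> plane_emb p e1 e2 za = a \<and> plane_emb p e1 e2 zb = b
    \<and> plane_emb p e1 e2 zc = c \<and> plane_emb p e1 e2 zd = d
    \<and> w = cross_ratio za zb zc zd)"

end

theory Submission
  imports Defs
begin

lemma aux: "(-y) * inverse b * (- c) * inverse x = (y*c) / (b*x :: complex)"
  by (simp add: divide_inverse mult_ac)

lemma cr_alg: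
  fixes za P Q :: complex and t v :: real
  assumes cond: "t * (1-t) * (cmod P)^2 = v * (1-v) * (cmod Q)^2"
    and v0: "v \<noteq> 0"
    and n1: "(of_real t - 1) * P - of_real v * Q \<noteq> 0"
    and n2: "of_real t * P + (1 - of_real v) * Q \<noteq> 0"
  shows "cross_ratio za (za + of_real t * P - of_real v * Q) (za + P) (za + of_real t * P - of_real v * Q + Q)
     = of_real (-(1-v)  *  (cmod (of_real t * P - of_real v * Q))^2 / (v  *  (cmod (of_real t * P + (1 - of_real v) * Q))^2))"
proof -
  define T where "T = (of_real t :: complex)"
  define V where "V = (of_real v :: complex)"
  define X where "X = T * P + (1-V) * Q"
  define Y where "Y = T * P - V * Q"
  have cX: "cnj X = T * cnj P + (1-V) * cnj Q" by (simp add: X_def T_def V_def)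
  have cY: "cnj Y = T * cnj P - V * cnj Q" by (simp add: Y_def T_def V_def)
  have c2: "T * (1-T) * (P * cnj P) = V * (1-V) * (Q * cnj Q)"
  proof -
    have "of_real (t * (1-t) * (cmod P)^2) = (of_real (v * (1-v) * (cmod Q)^2) :: complex)" using cond by simp
    thus ?thesis unfolding T_def V_def of_real_mult complex_norm_square by simp
  qed
  have X0: "X \<noteq> 0" using n2 by (simp add: X_def T_def V_def)
  have XX: "X  *  cnj X \<noteq> 0" using X0 by simp
  have V0: "V \<noteq> 0" using v0 by (simp add: V_def)
  have rhs: "(of_real (-(1-v)  *  (cmod Y)^2 / (v  *  (cmod X)^2)) :: complex) = -(1-V) * (Y * cnj Y) / (V * (X * cnj X))"
    by (simp add: complex_norm_square[symmetric] V_def)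
  have key: "Y * ((T-1) * P + (1-V) * Q)  *  (V * (X * cnj X)) = -(1-V) * (Y * cnj Y)  *  (((T-1) * P - V * Q) * X)"
  proof -
    have "Y * ((T-1) * P + (1-V) * Q)  *  (V * (X * cnj X)) - (-(1-V) * (Y * cnj Y)  *  (((T-1) * P - V * Q) * X))
       = -Y * X * (T * (1-T) * (P * cnj P) - V * (1-V) * (Q * cnj Q))"
      unfolding cX cY unfolding X_def Y_def by algebra
    thus ?thesis using c2 by simp
  qed
  have e1: "za - (za + T * P - V * Q) = -Y" by (simp add: Y_def)
  have e2: "(za + T * P - V * Q) - (za + P) = (T-1) * P - V * Q" by (simp add: algebra_simps)
  have e3: "(za + P) - (za + T * P - V * Q + Q) = -((T-1) * P + (1-V) * Q)" by (simp add: algebra_simps)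
  have e4: "(za + T * P - V * Q + Q) - za = X" by (simp add: X_def algebra_simps)
  have "cross_ratio za (za + T * P - V * Q) (za + P) (za + T * P - V * Q + Q)
      = (Y * ((T-1) * P + (1-V) * Q)) / (((T-1) * P - V * Q) * X)"
    unfolding cross_ratio_def e1 e2 e3 e4 by (rule aux)
  also have "\<dots> = -(1-V) * (Y * cnj Y) / (V * (X * cnj X))"
    using key n1 XX V0 X0 unfolding T_def V_def by (subst frac_eq_eq) auto
  finally have fin: "cross_ratio za (za + T * P - V * Q) (za + P) (za + T * P - V * Q + Q)
     = of_real (-(1-v) * (cmod Y)^2 / (v * (cmod X)^2))" unfolding rhs .
  thus ?thesis unfolding T_def V_def X_def Y_def .
qed

definition lin :: "'a::real_inner \<Rightarrow> 'a \<Rightarrow> complex \<Rightarrow> 'a" where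
  "lin e1 e2 z = Re z *\<^sub>R e1 + Im z *\<^sub>R e2"

lemma emb_lin: "plane_emb p e1 e2 z = p + lin e1 e2 z"
  by (simp add: plane_emb_def lin_def)

lemma lin_diff: "lin e1 e2 (z - w) = lin e1 e2 z - lin e1 e2 w"
  by (simp add: lin_def algebra_simps)

lemma lin_add: "lin e1 e2 (z + w) = lin e1 e2 z + lin e1 e2 w"
  by (simp add: lin_def algebra_simps)

lemma lin_scale: "lin e1 e2 (of_real t * z) = t *\<^sub>R lin e1 e2 z"
  by (simp add: lin_def algebra_simps)

lemma lin_norm:
  assumes "e1 \<bullet> e1 = 1" "e2 \<bullet> e2 = 1" "e1 \<bullet> e2 = 0"
  shows "norm (lin e1 e2 z) = cmod z"
proof -
  have "(norm (lin e1 e2 z))^2 = lin e1 e2 z \<bullet> lin e1 e2 z" by (simp add: power2_norm_eq_inner)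
  also have "\<dots> = (Re z)^2 + (Im z)^2"
    using assms by (simp add: lin_def inner_add_left inner_add_right inner_commute power2_eq_square)
  also have "\<dots> = (cmod z)^2" by (simp add: cmod_power2)
  finally show ?thesis by (simp add: power2_eq_iff_nonneg)
qed

lemma lin_zero:
  assumes "e1 \<bullet> e1 = 1" "e2 \<bullet> e2 = 1" "e1 \<bullet> e2 = 0" "lin e1 e2 z = 0"
  shows "z = 0"
  using lin_norm[OF assms(1-3), of z] assms(4) by simp

lemma qcr_main:
  fixes A B C D M :: "'a::euclidean_space"
  assumes dist: "distinct [A,B,C,D]" and ncol: "\<not> collinear {A,B,C}"
    and MA: "M = A + t *\<^sub>R (C - A)" and MB: "M = B + v *\<^sub>R (D - B)"
    and cond: "t * (1-t) * (norm (C-A))^2 = v * (1-v) * (norm (D-B))^2" and v0: "v \<noteq> 0"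
  shows "qcr A B C D = of_real (-(1-v) * (norm (B-A))^2 / (v * (norm (D-A))^2))"
proof -
  define Pr where "Pr = (\<lambda>w. \<exists>p e1 e2 za zb zc zd.
      e1 \<bullet> e1 = 1 \<and> e2 \<bullet> e2 = 1 \<and> e1 \<bullet> e2 = 0
    \<and> plane_emb p e1 e2 za = A \<and> plane_emb p e1 e2 zb = B
    \<and> plane_emb p e1 e2 zc = C \<and> plane_emb p e1 e2 zd = D
    \<and> w = cross_ratio za zb zc zd)"
  have q: "qcr A B C D = (SOME w. Pr w)" unfolding qcr_def Pr_def by simp
  have uniq: "w = of_real (-(1-v) * (norm (B-A))^2 / (v * (norm (D-A))^2))" if "Pr w" for w
  proof -
    from that obtain p e1 e2 za zb zc zd where o1: "e1 \<bullet> e1 = 1" and o2: "e2 \<bullet> e2 = 1"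
      and o3: "e1 \<bullet> e2 = 0" and hA: "plane_emb p e1 e2 za = A" and hB: "plane_emb p e1 e2 zb = B"
      and hC: "plane_emb p e1 e2 zc = C" and hD: "plane_emb p e1 e2 zd = D"
      and hw: "w = cross_ratio za zb zc zd"
      unfolding Pr_def by blast
    have dif: "Y - X = lin e1 e2 (y - x)" if "plane_emb p e1 e2 y = Y" "plane_emb p e1 e2 x = X" for x y X Y
      using that by (auto simp: emb_lin lin_diff)
    have nrm: "cmod z = norm (lin e1 e2 z)" for z using lin_norm[OF o1 o2 o3] by simp
    define P where "P = zc - za"
    define Q where "Q = zd - zb"
    have eqM: "lin e1 e2 (za + of_real t * P - zb - of_real v * Q) = 0"
    proof -
      have "lin e1 e2 (za + of_real t * P - zb - of_real v * Q)
          = (A + t *\<^sub>R (C - A)) - (B + v *\<^sub>R (D - B))"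
        unfolding P_def Q_def lin_diff lin_add lin_scale dif[OF hC hA] dif[OF hD hB]
          by (simp add: emb_lin algebra_simps flip: hA hB)
      thus ?thesis using MA MB by simp
    qed
    have zb: "zb = za + of_real t * P - of_real v * Q"
      using lin_zero[OF o1 o2 o3 eqM] by (simp add: algebra_simps)
    have zc: "zc = za + P" by (simp add: P_def)
    have zd: "zd = za + of_real t * P - of_real v * Q + Q" using zb by (simp add: Q_def)
    have nP: "cmod P = norm (C - A)" unfolding P_def nrm dif[OF hC hA] ..
    have nQ: "cmod Q = norm (D - B)" unfolding Q_def nrm dif[OF hD hB] ..
    have nBA: "cmod (of_real t * P - of_real v * Q) = norm (B - A)"
      unfolding nrm dif[OF hB hA] by (simp add: zb)
    have nDA: "cmod (of_real t * P + (1 - of_real v) * Q) = norm (D - A)"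
      unfolding nrm dif[OF hD hA] by (simp add: zd algebra_simps)
    have n1: "(of_real t - 1) * P - of_real v * Q \<noteq> 0"
    proof
      assume "(of_real t - 1) * P - of_real v * Q = 0"
      hence "zb = zc" by (simp add: zb zc algebra_simps)
      thus False using hB hC dist by auto
    qed
    have n2: "of_real t * P + (1 - of_real v) * Q \<noteq> 0"
    proof
      assume "of_real t * P + (1 - of_real v) * Q = 0"
      hence "zd = za" by (simp add: zd algebra_simps)
      thus False using hD hA dist by auto
    qed
    have "w = cross_ratio za (za + of_real t * P - of_real v * Q) (za + P) (za + of_real t * P - of_real v * Q + Q)"
      using hw zb zc zd by simp
    also have "\<dots> = of_real (-(1-v) * (cmod (of_real t * P - of_real v * Q))^2 / (v * (cmod (of_real t * P + (1 - of_real v) * Q))^2))"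
      by (rule cr_alg) (use cond nP nQ v0 n1 n2 in auto)
    finally show ?thesis unfolding nBA nDA .
  qed
  have ex: "\<exists>w. Pr w"
  proof -
    have BA: "B - A \<noteq> 0" using dist by auto
    define e1 where "e1 = (1 / norm (B - A)) *\<^sub>R (B - A)"
    define k where "k = (C - A) \<bullet> e1"
    define g where "g = (C - A) - k *\<^sub>R e1"
    have o1: "e1 \<bullet> e1 = 1" using BA unfolding e1_def
      by (simp add: power2_norm_eq_inner[symmetric] power2_eq_square)
    have g0: "g \<noteq> 0"
    proof
      assume "g = 0"
      hence Ck: "C = A + (k / norm (B - A)) *\<^sub>R (B - A)" unfolding g_def e1_def
        by (simp add: algebra_simps)
      have "collinear {A,B,C}" unfolding collinear_alt
        apply (rule exI[of _ A], rule exI[of _ "B - A"])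
        using Ck by (auto intro: exI[of _ 0] exI[of _ 1] exI[of _ "k / norm (B - A)"])
      thus False using ncol by blast
    qed
    define e2 where "e2 = (1 / norm g) *\<^sub>R g"
    have o2: "e2 \<bullet> e2 = 1" using g0 unfolding e2_def
      by (simp add: power2_norm_eq_inner[symmetric] power2_eq_square)
    have e1g: "e1 \<bullet> g = 0" unfolding g_def k_def using o1
      by (simp add: inner_diff_right inner_commute)
    have o3: "e1 \<bullet> e2 = 0" unfolding e2_def using e1g by simp
    define zb where "zb = Complex (norm (B - A)) 0"
    define zc where "zc = Complex k (norm g)"
    define zd where "zd = of_real (1 - 1/v) * zb + of_real (t/v) * zc"
    have lb: "lin e1 e2 zb = B - A" using BA unfolding zb_def lin_def e1_def by simp
    have lc: "lin e1 e2 zc = C - A" using g0 unfolding zc_def lin_def e2_def g_def by simp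
    have Dv: "v *\<^sub>R (D - B) = (A - B) + t *\<^sub>R (C - A)" using MA MB by (simp add: algebra_simps)
    have ld: "lin e1 e2 zd = D - A"
    proof -
      have "lin e1 e2 zd = (1 - 1/v) *\<^sub>R (B - A) + (t/v) *\<^sub>R (C - A)"
        unfolding zd_def lin_add lin_scale lb lc ..
      also have "\<dots> = (B - A) + (1/v) *\<^sub>R ((A - B) + t *\<^sub>R (C - A))"
        by (simp add: algebra_simps)
      also have "\<dots> = (B - A) + (1/v) *\<^sub>R (v *\<^sub>R (D - B))" unfolding Dv ..
      also have "\<dots> = D - A" using v0 by simp
      finally show ?thesis .
    qed
    have la: "lin e1 e2 0 = 0" by (simp add: lin_def)
    show ?thesis unfolding Pr_def
      apply (rule exI[of _ "cross_ratio 0 zb zc zd"])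
      apply (rule exI[of _ A], rule exI[of _ e1], rule exI[of _ e2], rule exI[of _ 0],
          rule exI[of _ zb], rule exI[of _ zc], rule exI[of _ zd])
      using o1 o2 o3 la lb lc ld by (simp add: emb_lin)
  qed
  show ?thesis unfolding q using someI_ex[OF ex] uniq by blast
qed


lemma power_pt:
  fixes A C M z :: "'a::real_inner"
  assumes "dist z A = r" "dist z C = r" "M = A + t *\<^sub>R (C - A)"
  shows "t * (1 - t) * (norm (C - A))^2 = r^2 - (norm (M - z))^2"
proof -
  define x where "x = A - z"
  define y where "y = C - A"
  have hx: "x \<bullet> x = r^2" using assms(1) unfolding x_def
    by (simp add: dist_norm power2_norm_eq_inner[symmetric] norm_minus_commute)
  have hxy: "(x + y) \<bullet> (x + y) = r^2" using assms(2) unfolding x_def y_def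
    by (simp add: dist_norm power2_norm_eq_inner[symmetric] norm_minus_commute)
  have M: "M - z = x + t *\<^sub>R y" using assms(3) by (simp add: x_def y_def algebra_simps)
  have e: "2 * (x \<bullet> y) = - (y \<bullet> y)" using hx hxy
    by (simp add: inner_add_left inner_add_right inner_commute)
  have "(norm (M - z))^2 = x \<bullet> x + t * (2 * (x \<bullet> y)) + t^2 * (y \<bullet> y)"
    unfolding M power2_norm_eq_inner
    by (simp add: inner_add_left inner_add_right inner_commute power2_eq_square algebra_simps)
  hence "(norm (M - z))^2 = r^2 - t * (y \<bullet> y) + t^2 * (y \<bullet> y)" unfolding e hx by simp
  moreover have "(norm (C - A))^2 = y \<bullet> y" by (simp add: y_def power2_norm_eq_inner)
  ultimately show ?thesis by (simp add: power2_eq_square algebra_simps)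
qed

theorem mainTheorem16:
  fixes f :: "int ^ 'm::finite \<Rightarrow> real ^ 'n::finite"
    and s :: "int ^ 'm \<Rightarrow> real"
    and alpha :: "'m \<Rightarrow> int ^ 'm \<Rightarrow> real"
  assumes iso: "isothermic_net f"
    and s_nz: "\<And>u. s u \<noteq> 0"
    and s_diag1: "\<And>u i j M d. i \<noteq> j \<Longrightarrow>
        M \<in> affine hull {f u, f (u + ev i + ev j)} \<Longrightarrow>
        M \<in> affine hull {f (u + ev i), f (u + ev j)} \<Longrightarrow>
        norm d = 1 \<Longrightarrow> (\<exists>c. f (u + ev i + ev j) - f u = c *\<^sub>R d) \<Longrightarrow>
        dlen d M (f (u + ev i + ev j)) / dlen d M (f u) = s (u + ev i + ev j) / s u"
    and s_diag2: "\<And>u i j M d. i \<noteq> j \<Longrightarrow>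
        M \<in> affine hull {f u, f (u + ev i + ev j)} \<Longrightarrow>
        M \<in> affine hull {f (u + ev i), f (u + ev j)} \<Longrightarrow>
        norm d = 1 \<Longrightarrow> (\<exists>c. f (u + ev j) - f (u + ev i) = c *\<^sub>R d) \<Longrightarrow>
        dlen d M (f (u + ev j)) / dlen d M (f (u + ev i)) = s (u + ev j) / s (u + ev i)"
    and alpha_def: "\<And>u i. (norm (f (u + ev i) - f u))\<^sup>2 = alpha i u * s u * s (u + ev i)"
    and ij: "i \<noteq> j"
  shows "qcr (f u) (f (u + ev i)) (f (u + ev i + ev j)) (f (u + ev j))
         = complex_of_real (alpha i u / alpha j u)"
  proof -
  define A where "A = f u"
  define B where "B = f (u + ev i)"
  define C where "C = f (u + ev i + ev j)"
  define D where "D = f (u + ev j)"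
  have nd: "nondeg_quad A B C D" and cc: "concircular A B C D"
    using iso ij unfolding isothermic_net_def circular_net_def Q_net_def A_def B_def C_def D_def
    by blast+
  from nd have dist: "distinct [A,B,C,D]" and ncol: "\<not> collinear {A,B,C}"
    unfolding nondeg_quad_def by blast+
  from nd obtain M where M1: "M \<in> affine hull {A, C}" and M2: "M \<in> affine hull {B, D}"
    and Mn: "M \<notin> {A,B,C,D}" unfolding nondeg_quad_def by blast
  from M1 obtain a t where Ma: "M = a *\<^sub>R A + t *\<^sub>R C" and at: "a + t = 1" unfolding affine_hull_2 by blast
  from at have "a = 1 - t" by simp
  with Ma have MA: "M = A + t *\<^sub>R (C - A)" by (simp add: algebra_simps)
  from M2 obtain b v where Mb: "M = b *\<^sub>R B + v *\<^sub>R D" and bv: "b + v = 1" unfolding affine_hull_2 by blast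
  from bv have "b = 1 - v" by simp
  with Mb have MB: "M = B + v *\<^sub>R (D - B)" by (simp add: algebra_simps)
  have v0: "v \<noteq> 0" using MB Mn by auto
  from cc obtain z r where "dist z A = r" "dist z B = r" "dist z C = r" "dist z D = r"
    unfolding concircular_def by blast
  note zr = this
  have p1: "t * (1 - t) * (norm (C - A))^2 = r^2 - (norm (M - z))^2"
    by (rule power_pt[OF zr(1) zr(3) MA])
  have p2: "v * (1 - v) * (norm (D - B))^2 = r^2 - (norm (M - z))^2"
    by (rule power_pt[OF zr(2) zr(4) MB])
  have cond: "t * (1-t) * (norm (C-A))^2 = v * (1-v) * (norm (D-B))^2"
    using p1 p2 by linarith
  have DB: "D - B \<noteq> 0" using dist by auto
  define d where "d = (1 / norm (D - B)) *\<^sub>R (D - B)"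
  have nd1: "norm d = 1" using DB by (simp add: d_def)
  have dD: "dlen d M D = (1 - v) * norm (D - B)"
  proof -
    have "D - M = (1 - v) *\<^sub>R (D - B)" using MB by (simp add: algebra_simps)
    thus ?thesis using DB unfolding dlen_def d_def
      by (simp add: power2_norm_eq_inner[symmetric] power2_eq_square)
  qed
  have dB: "dlen d M B = - v * norm (D - B)"
  proof -
    have "B - M = (- v) *\<^sub>R (D - B)" using MB by (simp add: algebra_simps)
    thus ?thesis using DB unfolding dlen_def d_def
      by (simp add: power2_norm_eq_inner[symmetric] power2_eq_square)
  qed
  have exd: "\<exists>c. f (u + ev j) - f (u + ev i) = c *\<^sub>R d"
    by (rule exI[of _ "norm (D - B)"]) (use DB in \<open>simp add: d_def D_def B_def\<close>)
  have "dlen d M (f (u + ev j)) / dlen d M (f (u + ev i)) = s (u + ev j) / s (u + ev i)"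
    by (rule s_diag2[OF ij M1[unfolded A_def C_def] M2[unfolded B_def D_def] nd1 exd])
  hence "dlen d M D / dlen d M B = s (u + ev j) / s (u + ev i)" unfolding B_def D_def .
  hence "s (u + ev j) / s (u + ev i) = ((1 - v) * norm (D - B)) / (- v * norm (D - B))"
    using dD dB by simp
  also have "\<dots> = - (1 - v) / v" using DB v0 by (simp add: field_simps)
  finally have sr: "s (u + ev j) / s (u + ev i) = - (1 - v) / v" .
  have aI: "(norm (B - A))^2 = alpha i u * s u * s (u + ev i)" using alpha_def unfolding A_def B_def by simp
  have aJ: "(norm (D - A))^2 = alpha j u * s u * s (u + ev j)" using alpha_def unfolding A_def D_def by simp
  have DA: "norm (D - A) \<noteq> 0" using dist by auto
  have ratio: "alpha i u / alpha j u = -(1-v) * (norm (B-A))^2 / (v * (norm (D-A))^2)"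
  proof -
    have sn: "s u \<noteq> 0" "s (u + ev i) \<noteq> 0" "s (u + ev j) \<noteq> 0" using s_nz by auto
    have ai: "alpha i u = (norm (B - A))^2 / (s u * s (u + ev i))" using aI sn by simp
    have aj: "alpha j u = (norm (D - A))^2 / (s u * s (u + ev j))" using aJ sn by simp
    have sD: "s (u + ev j) = (- (1 - v) / v) * s (u + ev i)" using sr sn by (simp add: divide_eq_eq)
    show ?thesis unfolding ai aj sD using sn v0 DA by (simp add: field_simps)
  qed
  have "qcr A B C D = of_real (-(1-v) * (norm (B-A))^2 / (v * (norm (D-A))^2))"
    by (rule qcr_main[OF dist ncol MA MB cond v0])
  thus ?thesis unfolding ratio A_def B_def C_def D_def .
qed

end
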